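(* The function $\mu\mapsto\mathcal{I}_\mathrm{sym}(\mu)$ is weakly* lower semicontinuous on $\mathrm{Prob}([-R,R]^n)$.
   Context: Fix $R>0$ and $n\in\mathbb{N}$. $\mathrm{Prob}([-R,R]^n)$ denotes the Borel probability measures on $[-R,R]^n$; $C_\mathbb{R}([-R,R]^n)$ real continuous functions with sup-norm; $\mu(h)=\int h\,d\mu$; the $i$th marginal $\mu_i$ of $\mu$ is its image under the $i$th coordinate projection. For $\mathbf{x}\in\mathbb{R}^N$ let $\kappa_N(\mathbf{x})=\frac1N\sum_jx_j$ (powers coordinatewise); $[-R,R]_\le^N$ is the set of vectors in $[-R,R]^N$ with nondecreasing coordinates; $S_N$ acts by $\sigma(\mathbf{x})=(x_{\sigma^{-1}(1)},\dots,x_{\sigma^{-1}(N)})$. An approximating sequence for $(\mu_1,\dots,\mu_n)$ is $\Xi(N)=(\xi_1(N),\dots,\xi_n(N))$ with $\xi_i(N)\in[-R,R]_\le^N$ and $\kappa_N(\xi_i(N)^k)\to\int x^k\,d\mu_i$ for all $k$. For $h\in C_\mathbb{R}([-R,R]^n)$, $\kappa_N(h(\mathbf{x}_1,\dots,\mathbf{x}_n))=\frac1N\sum_{j=1}^Nh(x_{1j},\dots,x_{nj})$. The mutual pressure is $$P_\mathrm{sym}(h:\mu_1,\dots,\mu_n)=\limsup_{N\to\infty}\frac1N\log\Biggl[\frac1{(N!)^n}\sum_{\sigma_1,\dots,\sigma_n\in S_N}\exp\bigl(N\kappa_N(h(\sigma_1(\xi_1(N)),\dots,\sigma_n(\xi_n(N))))\bigr)\Biggr]$$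 (independent of the approximating sequence). For $\mu\in\mathrm{Prob}([-R,R]^n)$ with marginals $\mu_1,\dots,\mu_n$, $\mathcal{I}_\mathrm{sym}(\mu)=\sup\{\mu(h)-P_\mathrm{sym}(h:\mu_1,\dots,\mu_n):h\in C_\mathbb{R}([-R,R]^n)\}$. *)

theory Defs
  imports "HOL-Probability.Probability"
begin

text \<open>The cube [-R,R]^n, with coordinates indexed by the finite type 'n (so n = CARD('n)).\<close>
definition cube :: "real \<Rightarrow> (real^'n) set" where
  "cube R = {x. \<forall>i. -R \<le> x $ i \<and> x $ i \<le> R}"

definition ProbCube :: "real \<Rightarrow> (real^'n) measure set" where
  "ProbCube R = {\<mu>. prob_space \<mu> \<and> space \<mu> = cube R \<and>
                     sets \<mu> = sets (restrict_space borel (cube R))}"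

definition marginal :: "'n \<Rightarrow> (real^'n) measure \<Rightarrow> real measure" where
  "marginal i \<mu> = distr \<mu> borel (\<lambda>x. x $ i)"

definition kappa :: "nat \<Rightarrow> (nat \<Rightarrow> real) \<Rightarrow> real" where
  "kappa N x = (\<Sum>j<N. x j) / real N"

definition approx_seq :: "real \<Rightarrow> ('n \<Rightarrow> real measure) \<Rightarrow> (nat \<Rightarrow> 'n \<Rightarrow> nat \<Rightarrow> real) \<Rightarrow> bool" where
  "approx_seq R m \<Xi> \<longleftrightarrow>
     (\<forall>N i. (\<forall>j<N. -R \<le> \<Xi> N i j \<and> \<Xi> N i j \<le> R) \<and>
            (\<forall>j k. j \<le> k \<and> k < N \<longrightarrow> \<Xi> N i j \<le> \<Xi> N i k)) \<and>
     (\<forall>i k. (\<lambda>N. kappa N (\<lambda>j. (\<Xi> N i j) ^ k)) \<longlonglongrightarrow> integral\<^sup>L (m i) (\<lambda>x. x ^ k))"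

definition perm_act :: "(nat \<Rightarrow> nat) \<Rightarrow> (nat \<Rightarrow> real) \<Rightarrow> nat \<Rightarrow> real" where
  "perm_act \<sigma> x = (\<lambda>j. x (inv \<sigma> j))"

definition pressure_term :: "((real^'n) \<Rightarrow> real) \<Rightarrow> (nat \<Rightarrow> 'n \<Rightarrow> nat \<Rightarrow> real) \<Rightarrow> nat \<Rightarrow> real" where
  "pressure_term h \<Xi> N =
     ln ((1 / (fact N) ^ CARD('n)) *
         (\<Sum>\<sigma> \<in> PiE UNIV (\<lambda>_. {\<sigma>. \<sigma> permutes {..<N}}).
            exp (real N * kappa N (\<lambda>j. h (\<chi> i. perm_act (\<sigma> i) (\<Xi> N i) j))))) / real N"

text \<open>Mutual pressure P_sym(h : m_1,...,m_n), computed with an (arbitrarily chosen)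
  approximating sequence; the paper notes it is independent of this choice.\<close>
definition P_sym :: "real \<Rightarrow> ((real^'n) \<Rightarrow> real) \<Rightarrow> ('n \<Rightarrow> real measure) \<Rightarrow> ereal" where
  "P_sym R h m = limsup (\<lambda>N. ereal (pressure_term h (SOME \<Xi>. approx_seq R m \<Xi>) N))"

definition I_sym :: "real \<Rightarrow> (real^'n) measure \<Rightarrow> ereal" where
  "I_sym R \<mu> = (SUP h \<in> {h. continuous_on (cube R) h}.
                  ereal (integral\<^sup>L \<mu> h) - P_sym R h (\<lambda>i. marginal i \<mu>))"

definition weak_star_conv :: "real \<Rightarrow> (nat \<Rightarrow> (real^'n) measure) \<Rightarrow> (real^'n) measure \<Rightarrow> bool" where
  "weak_star_conv R \<mu>s \<mu> \<longleftrightarrow>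
     (\<forall>h :: (real^'n) \<Rightarrow> real. continuous_on (cube R) h \<longrightarrow>
          (\<lambda>k. integral\<^sup>L (\<mu>s k) h) \<longlonglongrightarrow> integral\<^sup>L \<mu> h)"

end

theory Submission
  imports Defs
begin

lemma ln_sum_exp_compare:
  fixes a b :: "'s \<Rightarrow> real"
  assumes S: "finite S" "S \<noteq> {}" and F: "F > 0" and N: "N > 0"
    and ab: "\<And>s. s \<in> S \<Longrightarrow> a s \<le> b s + c"
  shows "ln ((1/F) * (\<Sum>s\<in>S. exp (N * a s))) / N \<le> ln ((1/F) * (\<Sum>s\<in>S. exp (N * b s))) / N + c"
proof -
  have pos: "0 < (\<Sum>s\<in>S. exp (N * b s))" using S by (intro sum_pos) auto
  have pos2: "0 < (\<Sum>s\<in>S. exp (N * a s))" using S by (intro sum_pos) auto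
  have "(\<Sum>s\<in>S. exp (N * a s)) \<le> (\<Sum>s\<in>S. exp (N * c) * exp (N * b s))"
  proof (rule sum_mono)
    fix s assume "s \<in> S"
    then have "N * a s \<le> N * c + N * b s" using ab[of s] N by (simp add: distrib_left[symmetric] mult_left_mono)
    then show "exp (N * a s) \<le> exp (N * c) * exp (N * b s)" by (simp add: exp_add[symmetric])
  qed
  also have "\<dots> = exp (N * c) * (\<Sum>s\<in>S. exp (N * b s))" by (simp add: sum_distrib_left)
  finally have le: "(\<Sum>s\<in>S. exp (N * a s)) \<le> exp (N * c) * (\<Sum>s\<in>S. exp (N * b s))" .
  have "ln ((1/F) * (\<Sum>s\<in>S. exp (N * a s))) \<le> ln ((1/F) * (exp (N * c) * (\<Sum>s\<in>S. exp (N * b s))))"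
    using le pos pos2 F by (intro ln_mono) (auto intro!: divide_right_mono)
  also have "\<dots> = ln (exp (N * c) * ((1/F) * (\<Sum>s\<in>S. exp (N * b s))))"
    by (simp add: algebra_simps)
  also have "\<dots> = N * c + ln ((1/F) * (\<Sum>s\<in>S. exp (N * b s)))"
    using pos F by (subst ln_mult) auto
  finally show ?thesis using N by (simp add: field_simps)
qed

lemma cube_cbox: "cube R = cbox (\<chi> i. -R) (\<chi> i. R :: real^'n)"
  unfolding cube_def by (auto simp: mem_box_cart)

lemma compact_cube: "compact (cube R)"
  unfolding cube_cbox by simp

lemma unif_bound:
  fixes h :: "real^'n \<Rightarrow> real"
  assumes h: "continuous_on (cube R) h" and e: "e > 0"
  shows "\<exists>C\<ge>0. \<forall>p\<in>(cube R :: (real^'n) set). \<forall>q\<in>cube R. \<bar>h p - h q\<bar> \<le> e + C * dist p q"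
proof -
  have uc: "uniformly_continuous_on (cube R) h"
    using compact_uniformly_continuous[OF h compact_cube] .
  then obtain d where d: "d > 0" "\<And>x x'. x \<in> cube R \<Longrightarrow> x' \<in> cube R \<Longrightarrow> dist x' x < d \<Longrightarrow> dist (h x') (h x) < e"
    using e unfolding uniformly_continuous_on_def by metis
  have "compact (h ` cube R)" by (rule compact_continuous_image[OF h compact_cube])
  then obtain B where B: "B > 0" "\<And>x. x \<in> h ` cube R \<Longrightarrow> norm x \<le> B"
    using compact_imp_bounded bounded_pos by metis
  show ?thesis
  proof (intro exI[of _ "2*B/d"] conjI ballI)
    show "0 \<le> 2 * B / d" using B d by simp
    fix p q :: "real^'n" assume p: "p \<in> cube R" and q: "q \<in> cube R"
    show "\<bar>h p - h q\<bar> \<le> e + 2 * B / d * dist p q"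
    proof (cases "dist p q < d")
      case True
      then have "dist (h p) (h q) < e" using d(2)[OF q p] by simp
      then show ?thesis using B d by (simp add: dist_real_def) (smt (verit) divide_nonneg_nonneg mult_nonneg_nonneg zero_le_dist)
    next
      case False
      have "\<bar>h p\<bar> \<le> B" "\<bar>h q\<bar> \<le> B" using B(2) p q by auto
      moreover have "2 * B \<le> 2 * B / d * dist p q" using False d B
        by (simp add: field_simps)
      ultimately show ?thesis using e by linarith
    qed
  qed
qed

lemma pressure_compare:
  fixes h :: "real^'n \<Rightarrow> real"
  assumes h: "continuous_on (cube R) h" and e: "e > 0"
  shows "\<exists>d>0. \<forall>\<Xi> H N. N > 0 \<longrightarrow>
     (\<forall>i j. j < N \<longrightarrow> -R \<le> \<Xi> N i j \<and> \<Xi> N i j \<le> R \<and> -R \<le> H N i j \<and> H N i j \<le> R) \<longrightarrow>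
     (\<forall>i. (\<Sum>j<N. \<bar>\<Xi> N i j - H N i j\<bar>) / real N \<le> d) \<longrightarrow>
     pressure_term h \<Xi> N \<le> pressure_term h H N + e"
proof -
  obtain C where C: "C \<ge> 0" "\<And>p q. p\<in>cube R \<Longrightarrow> q\<in>cube R \<Longrightarrow> \<bar>h p - h q\<bar> \<le> e/2 + C * dist p q"
    using unif_bound[OF h, of "e/2"] e by auto
  define d where "d = e / (2 * (C * CARD('n) + 1))"
  have "C * CARD('n) \<ge> 0" using C by simp
  then have dpos: "d > 0" using e unfolding d_def by (intro divide_pos_pos) auto
  have Cd: "C * CARD('n) * d \<le> e/2"
  proof -
    have eq: "C * CARD('n) * d = e/2 * (C * CARD('n) / (C * CARD('n) + 1))"
      unfolding d_def using \<open>C * CARD('n) \<ge> 0\<close> by (simp add: field_simps)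
    have "C * CARD('n) / (C * CARD('n) + 1) \<le> 1" using \<open>C * CARD('n) \<ge> 0\<close> by simp
    then have "e/2 * (C * CARD('n) / (C * CARD('n) + 1)) \<le> e/2 * 1" using e by (intro mult_left_mono) auto
    then show ?thesis using eq by simp
  qed
  show ?thesis
  proof (intro exI[of _ d] conjI allI impI dpos)
    fix \<Xi> H :: "nat \<Rightarrow> 'n \<Rightarrow> nat \<Rightarrow> real" and N :: nat
    assume N: "N > 0"
      and rng: "\<forall>i j. j < N \<longrightarrow> -R \<le> \<Xi> N i j \<and> \<Xi> N i j \<le> R \<and> -R \<le> H N i j \<and> H N i j \<le> R"
      and dd: "\<forall>i. (\<Sum>j<N. \<bar>\<Xi> N i j - H N i j\<bar>) / real N \<le> d"
    define S where "S = PiE (UNIV::'n set) (\<lambda>_. {\<sigma>. \<sigma> permutes {..<N}})"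
    have finS: "finite S" unfolding S_def by (intro finite_PiE) (auto simp: finite_permutations)
    have neS: "S \<noteq> {}" unfolding S_def by (auto simp: PiE_eq_empty_iff intro: permutes_id)
    have key: "kappa N (\<lambda>j. h (\<chi> i. perm_act (\<sigma> i) (\<Xi> N i) j))
        \<le> kappa N (\<lambda>j. h (\<chi> i. perm_act (\<sigma> i) (H N i) j)) + e" if s: "\<sigma> \<in> S" for \<sigma>
    proof -
      have perm: "\<And>i. inv (\<sigma> i) permutes {..<N}" using s unfolding S_def
        by (auto intro: permutes_inv)
      have inr: "\<And>i j. j < N \<Longrightarrow> inv (\<sigma> i) j < N"
        using perm permutes_in_image by fastforce
      define p where "p j = (\<chi> i. perm_act (\<sigma> i) (\<Xi> N i) j)" for j
      define q where "q j = (\<chi> i. perm_act (\<sigma> i) (H N i) j)" for j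
      have pc: "p j \<in> cube R" "q j \<in> cube R" if "j < N" for j
        using rng inr[OF that] unfolding p_def q_def cube_def perm_act_def by auto
      have "(\<Sum>j<N. h (p j)) - (\<Sum>j<N. h (q j)) \<le> (\<Sum>j<N. \<bar>h (p j) - h (q j)\<bar>)"
        by (simp add: sum_subtractf[symmetric] sum_mono)
      also have "\<dots> \<le> (\<Sum>j<N. e/2 + C * (\<Sum>i\<in>UNIV. \<bar>\<Xi> N i (inv (\<sigma> i) j) - H N i (inv (\<sigma> i) j)\<bar>))"
      proof (rule sum_mono)
        fix j assume "j \<in> {..<N}"
        then have j: "j < N" by simp
        have "dist (p j) (q j) \<le> (\<Sum>i\<in>UNIV. \<bar>(p j - q j) $ i\<bar>)"
          unfolding dist_norm by (rule norm_le_l1_cart)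
        also have "\<dots> = (\<Sum>i\<in>UNIV. \<bar>\<Xi> N i (inv (\<sigma> i) j) - H N i (inv (\<sigma> i) j)\<bar>)"
          unfolding p_def q_def perm_act_def by simp
        finally have "C * dist (p j) (q j) \<le> C * (\<Sum>i\<in>UNIV. \<bar>\<Xi> N i (inv (\<sigma> i) j) - H N i (inv (\<sigma> i) j)\<bar>)"
          using C(1) by (simp add: mult_left_mono)
        then show "\<bar>h (p j) - h (q j)\<bar> \<le> e/2 + C * (\<Sum>i\<in>UNIV. \<bar>\<Xi> N i (inv (\<sigma> i) j) - H N i (inv (\<sigma> i) j)\<bar>)"
          using C(2)[OF pc[OF j]] by linarith
      qed
      also have "\<dots> = N * (e/2) + C * (\<Sum>j<N. \<Sum>i\<in>UNIV. \<bar>\<Xi> N i (inv (\<sigma> i) j) - H N i (inv (\<sigma> i) j)\<bar>)"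
        by (simp add: sum.distrib sum_distrib_left)
      also have "(\<Sum>j<N. \<Sum>i\<in>UNIV. \<bar>\<Xi> N i (inv (\<sigma> i) j) - H N i (inv (\<sigma> i) j)\<bar>) = (\<Sum>i\<in>UNIV. \<Sum>j<N. \<bar>\<Xi> N i (inv (\<sigma> i) j) - H N i (inv (\<sigma> i) j)\<bar>)"
        by (rule sum.swap)
      also have "(\<Sum>i\<in>UNIV. \<Sum>j<N. \<bar>\<Xi> N i (inv (\<sigma> i) j) - H N i (inv (\<sigma> i) j)\<bar>)
              = (\<Sum>i\<in>UNIV. \<Sum>j<N. \<bar>\<Xi> N i j - H N i j\<bar>)"
      proof (rule sum.cong[OF refl])
        fix i
        show "(\<Sum>j<N. \<bar>\<Xi> N i (inv (\<sigma> i) j) - H N i (inv (\<sigma> i) j)\<bar>) = (\<Sum>j<N. \<bar>\<Xi> N i j - H N i j\<bar>)"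
          using sum.permute[OF perm[of i], of "\<lambda>j. \<bar>\<Xi> N i j - H N i j\<bar>"] by (simp add: o_def)
      qed
      also have "(\<Sum>i\<in>UNIV. \<Sum>j<N. \<bar>\<Xi> N i j - H N i j\<bar>) \<le> (\<Sum>i\<in>(UNIV::'n set). N * d)"
      proof (rule sum_mono)
        fix i show "(\<Sum>j<N. \<bar>\<Xi> N i j - H N i j\<bar>) \<le> N * d" using dd[rule_format, of i] N
          by (simp add: field_simps)
      qed
      finally have "(\<Sum>j<N. h (p j)) - (\<Sum>j<N. h (q j)) \<le> N * (e/2) + C * (CARD('n) * (N * d))"
        using C(1) by (simp add: mult_left_mono)
      also have "\<dots> \<le> N * e" using Cd N
      proof -
        have "C * (CARD('n) * (N * d)) = N * (C * CARD('n) * d)" by (simp add: algebra_simps)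
        also have "\<dots> \<le> N * (e/2)" using Cd by (intro mult_left_mono) auto
        finally show ?thesis by simp
      qed
      finally have "(\<Sum>j<N. h (p j)) \<le> (\<Sum>j<N. h (q j)) + N * e" by simp
      then show ?thesis unfolding kappa_def p_def[symmetric] q_def[symmetric] using N
        by (simp add: field_simps)
    qed
    show "pressure_term h \<Xi> N \<le> pressure_term h H N + e"
      unfolding pressure_term_def S_def[symmetric]
      by (rule ln_sum_exp_compare[OF finS neS _ _ key]) (use N in auto)
  qed
qed

definition gridpt :: "real \<Rightarrow> nat \<Rightarrow> nat \<Rightarrow> real" where
  "gridpt R M l = -R + real l * (2*R/real M)"

definition ramp :: "real \<Rightarrow> nat \<Rightarrow> nat \<Rightarrow> real \<Rightarrow> real" where
  "ramp R M l s = min 1 (max 0 ((gridpt R M (Suc l) - s) / (2*R/real M)))"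

definition ind :: "bool \<Rightarrow> real" where "ind P = (if P then 1 else 0)"

lemma sorted_count:
  fixes x y :: "nat \<Rightarrow> real"
  assumes sx: "\<And>j k. j \<le> k \<Longrightarrow> k < N \<Longrightarrow> x j \<le> x k"
      and sy: "\<And>j k. j \<le> k \<Longrightarrow> k < N \<Longrightarrow> y j \<le> y k"
  shows "(\<Sum>j<N. \<bar>ind (x j \<le> t) - ind (y j \<le> t)\<bar>) = \<bar>(\<Sum>j<N. ind (x j \<le> t)) - (\<Sum>j<N. ind (y j \<le> t))\<bar>"
proof -
  have "(\<forall>j<N. ind (y j \<le> t) \<le> ind (x j \<le> t)) \<or> (\<forall>j<N. ind (x j \<le> t) \<le> ind (y j \<le> t))"
  proof (rule ccontr)
    assume "\<not> ?thesis"
    then obtain j k where j: "j < N" "x j > t" "y j \<le> t" and k: "k < N" "x k \<le> t" "y k > t"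
      by (auto simp: ind_def split: if_splits)
    show False
    proof (cases "j \<le> k")
      case True then show False using sx[OF True k(1)] j k by linarith
    next
      case False then show False using sy[of k j] j k by linarith
    qed
  qed
  then show ?thesis
  proof
    assume a: "\<forall>j<N. ind (y j \<le> t) \<le> ind (x j \<le> t)"
    have "(\<Sum>j<N. \<bar>ind (x j \<le> t) - ind (y j \<le> t)\<bar>) = (\<Sum>j<N. ind (x j \<le> t) - ind (y j \<le> t))"
      using a by (intro sum.cong) auto
    moreover have "(\<Sum>j<N. ind (y j \<le> t)) \<le> (\<Sum>j<N. ind (x j \<le> t))" using a by (intro sum_mono) auto
    ultimately show ?thesis by (simp add: sum_subtractf)
  next
    assume a: "\<forall>j<N. ind (x j \<le> t) \<le> ind (y j \<le> t)"
    have "(\<Sum>j<N. \<bar>ind (x j \<le> t) - ind (y j \<le> t)\<bar>) = (\<Sum>j<N. ind (y j \<le> t) - ind (x j \<le> t))"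
      using a by (intro sum.cong) auto
    moreover have "(\<Sum>j<N. ind (x j \<le> t)) \<le> (\<Sum>j<N. ind (y j \<le> t))" using a by (intro sum_mono) auto
    ultimately show ?thesis by (simp add: sum_subtractf)
  qed
qed

lemma grid_count_aux:
  fixes a b R :: real
  assumes R: "R > 0" and M: "M > 0" and ab: "-R \<le> b" "b \<le> a" "a \<le> R"
  shows "a - b \<le> 2*R/M + 2*R/M * (\<Sum>l<M. \<bar>ind (a \<le> gridpt R M l) - ind (b \<le> gridpt R M l)\<bar>)"
proof -
  define \<eta> where "\<eta> = 2*R/M"
  have eta: "\<eta> > 0" using R M by (simp add: \<eta>_def)
  define lo where "lo = \<lceil>(b+R)/\<eta>\<rceil>"
  define hi where "hi = \<lceil>(a+R)/\<eta>\<rceil>"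
  have "(b+R)/\<eta> \<ge> 0" using ab eta by simp
  then have lo0: "lo \<ge> 0" unfolding lo_def by simp
  have lohi: "lo \<le> hi" unfolding lo_def hi_def using ab eta by (intro ceiling_mono divide_right_mono) auto
  have "(a+R)/\<eta> \<le> 2*R/\<eta>" using ab eta by (intro divide_right_mono) auto
  also have "2*R/\<eta> = M" using M R by (simp add: \<eta>_def)
  finally have hiM: "hi \<le> M" unfolding hi_def by (simp add: ceiling_le_iff)
  have grid: "gridpt R M l = -R + l * \<eta>" for l unfolding gridpt_def \<eta>_def by simp
  have sub: "{nat lo..<nat hi} \<subseteq> {..<M}" using hiM by auto
  have one: "\<bar>ind (a \<le> gridpt R M l) - ind (b \<le> gridpt R M l)\<bar> = 1" if l: "l \<in> {nat lo..<nat hi}" for l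
  proof -
    have "int l \<ge> lo" "int l < hi" using l lo0 by auto
    then have "(b+R)/\<eta> \<le> l" "l < (a+R)/\<eta>" unfolding lo_def hi_def
      by (simp_all add: ceiling_le_iff less_ceiling_iff)
    then have "b + R \<le> l * \<eta>" "l * \<eta> < a + R" using eta by (simp_all add: field_simps)
    then show ?thesis unfolding grid ind_def by auto
  qed
  have "real (nat hi - nat lo) = (\<Sum>l\<in>{nat lo..<nat hi}. \<bar>ind (a \<le> gridpt R M l) - ind (b \<le> gridpt R M l)\<bar>)"
    using one by simp
  also have "\<dots> \<le> (\<Sum>l<M. \<bar>ind (a \<le> gridpt R M l) - ind (b \<le> gridpt R M l)\<bar>)"
    by (rule sum_mono2[OF _ sub]) auto
  finally have cnt: "real_of_int (hi - lo) \<le> (\<Sum>l<M. \<bar>ind (a \<le> gridpt R M l) - ind (b \<le> gridpt R M l)\<bar>)"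
    using lo0 lohi by (simp add: of_nat_diff)
  have "(a+R)/\<eta> \<le> hi" "lo < (b+R)/\<eta> + 1" unfolding hi_def lo_def by linarith+
  moreover have "(a-b)/\<eta> = (a+R)/\<eta> - (b+R)/\<eta>" by (simp add: diff_divide_distrib[symmetric])
  ultimately have "(a - b)/\<eta> \<le> 1 + real_of_int (hi - lo)" by simp
  then have "a - b \<le> \<eta> * (1 + real_of_int (hi - lo))" using eta by (simp add: field_simps)
  also have "\<dots> \<le> \<eta> * (1 + (\<Sum>l<M. \<bar>ind (a \<le> gridpt R M l) - ind (b \<le> gridpt R M l)\<bar>))"
    using cnt eta by (intro mult_left_mono) auto
  finally show ?thesis by (simp add: \<eta>_def algebra_simps)
qed

lemma grid_count:
  fixes a b R :: real
  assumes R: "R > 0" and M: "M > 0" and ab: "-R \<le> b" "b \<le> R" "-R \<le> a" "a \<le> R"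
  shows "\<bar>a - b\<bar> \<le> 2*R/M + 2*R/M * (\<Sum>l<M. \<bar>ind (a \<le> gridpt R M l) - ind (b \<le> gridpt R M l)\<bar>)"
proof (cases "b \<le> a")
  case True then show ?thesis using grid_count_aux[OF R M ab(1) True ab(4)] by simp
next
  case False
  have "b - a \<le> 2*R/M + 2*R/M * (\<Sum>l<M. \<bar>ind (b \<le> gridpt R M l) - ind (a \<le> gridpt R M l)\<bar>)"
    using False ab by (intro grid_count_aux[OF R M]) auto
  then show ?thesis using False by (simp add: abs_minus_commute)
qed

lemma ramp_bounds:
  assumes R: "R > 0" and M: "M > 0"
  shows "ind (s \<le> gridpt R M l) \<le> ramp R M l s" "ramp R M l s \<le> ind (s \<le> gridpt R M (Suc l))"
proof -
  define \<eta> where "\<eta> = 2*R/M"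
  have eta: "\<eta> > 0" using R M by (simp add: \<eta>_def)
  have g: "gridpt R M (Suc l) = gridpt R M l + \<eta>" unfolding gridpt_def \<eta>_def by (simp add: algebra_simps add_divide_distrib)
  show "ind (s \<le> gridpt R M l) \<le> ramp R M l s"
  proof (cases "s \<le> gridpt R M l")
    case True
    then have "1 \<le> (gridpt R M (Suc l) - s) / \<eta>" using eta g by (simp add: field_simps)
    then show ?thesis using True unfolding ramp_def ind_def \<eta>_def[symmetric] by simp
  next
    case False then show ?thesis unfolding ramp_def ind_def by simp
  qed
  show "ramp R M l s \<le> ind (s \<le> gridpt R M (Suc l))"
  proof (cases "s \<le> gridpt R M (Suc l)")
    case True then show ?thesis unfolding ramp_def ind_def by simp
  next
    case False
    then have "(gridpt R M (Suc l) - s) / \<eta> \<le> 0" using eta by (simp add: divide_nonpos_pos)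
    then show ?thesis using False unfolding ramp_def ind_def \<eta>_def[symmetric] by simp
  qed
qed

lemma l1_bound:
  fixes x y :: "nat \<Rightarrow> real"
  assumes R: "R > 0" and M: "M > 0" and N: "N > 0"
    and rx: "\<And>j. j < N \<Longrightarrow> -R \<le> x j \<and> x j \<le> R"
    and ry: "\<And>j. j < N \<Longrightarrow> -R \<le> y j \<and> y j \<le> R"
    and sx: "\<And>j k. j \<le> k \<Longrightarrow> k < N \<Longrightarrow> x j \<le> x k"
    and sy: "\<And>j k. j \<le> k \<Longrightarrow> k < N \<Longrightarrow> y j \<le> y k"
  shows "(\<Sum>j<N. \<bar>x j - y j\<bar>) / N \<le> 3 * (2*R/M) + 2*R/M *
           (\<Sum>l<M. \<bar>kappa N (\<lambda>j. ramp R M l (x j)) - kappa N (\<lambda>j. ramp R M l (y j))\<bar>)"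
proof -
  define \<eta> where "\<eta> = 2*R/M"
  have eta: "\<eta> > 0" using R M by (simp add: \<eta>_def)
  define Cx where "Cx l = (\<Sum>j<N. ind (x j \<le> gridpt R M l))" for l
  define Cy where "Cy l = (\<Sum>j<N. ind (y j \<le> gridpt R M l))" for l
  define Px where "Px l = (\<Sum>j<N. ramp R M l (x j))" for l
  define Py where "Py l = (\<Sum>j<N. ramp R M l (y j))" for l
  have "(\<Sum>j<N. \<bar>x j - y j\<bar>) \<le> (\<Sum>j<N. \<eta> + \<eta> * (\<Sum>l<M. \<bar>ind (x j \<le> gridpt R M l) - ind (y j \<le> gridpt R M l)\<bar>))"
    unfolding \<eta>_def using rx ry by (intro sum_mono grid_count[OF R M]) auto
  also have "\<dots> = N * \<eta> + \<eta> * (\<Sum>l<M. \<Sum>j<N. \<bar>ind (x j \<le> gridpt R M l) - ind (y j \<le> gridpt R M l)\<bar>)"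
    by (simp add: sum.distrib sum_distrib_left[symmetric] sum.swap[of _ "{..<N}" "{..<M}"])
  also have "(\<Sum>l<M. \<Sum>j<N. \<bar>ind (x j \<le> gridpt R M l) - ind (y j \<le> gridpt R M l)\<bar>) = (\<Sum>l<M. \<bar>Cx l - Cy l\<bar>)"
    unfolding Cx_def Cy_def by (intro sum.cong refl sorted_count sx sy) auto
  also have "(\<Sum>l<M. \<bar>Cx l - Cy l\<bar>) \<le> (\<Sum>l<M. \<bar>Px l - Py l\<bar> + (Cx (Suc l) - Cx l) + (Cy (Suc l) - Cy l))"
  proof (rule sum_mono)
    fix l
    have "Cx l \<le> Px l" "Px l \<le> Cx (Suc l)" "Cy l \<le> Py l" "Py l \<le> Cy (Suc l)"
      unfolding Cx_def Px_def Cy_def Py_def using ramp_bounds[OF R M] by (auto intro: sum_mono)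
    then show "\<bar>Cx l - Cy l\<bar> \<le> \<bar>Px l - Py l\<bar> + (Cx (Suc l) - Cx l) + (Cy (Suc l) - Cy l)" by linarith
  qed
  also have "\<dots> = (\<Sum>l<M. \<bar>Px l - Py l\<bar>) + (Cx M - Cx 0) + (Cy M - Cy 0)"
    by (simp add: sum.distrib sum_lessThan_telescope)
  also have "\<dots> \<le> (\<Sum>l<M. \<bar>Px l - Py l\<bar>) + N + N"
  proof -
    have "Cx M \<le> N" "Cy M \<le> N" "Cx 0 \<ge> 0" "Cy 0 \<ge> 0" unfolding Cx_def Cy_def
      using sum_mono[of "{..<N}" "\<lambda>j. ind (x j \<le> gridpt R M M)" "\<lambda>_. 1"]
            sum_mono[of "{..<N}" "\<lambda>j. ind (y j \<le> gridpt R M M)" "\<lambda>_. 1"]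
      by (auto simp: ind_def intro!: sum_nonneg)
    then show ?thesis by simp
  qed
  finally have main: "(\<Sum>j<N. \<bar>x j - y j\<bar>) \<le> N * \<eta> + \<eta> * ((\<Sum>l<M. \<bar>Px l - Py l\<bar>) + N + N)"
    using eta by (simp add: mult_left_mono)
  have k: "(\<Sum>l<M. \<bar>Px l - Py l\<bar>) = N * (\<Sum>l<M. \<bar>kappa N (\<lambda>j. ramp R M l (x j)) - kappa N (\<lambda>j. ramp R M l (y j))\<bar>)"
    unfolding Px_def Py_def kappa_def sum_distrib_left using N
    by (intro sum.cong refl) (simp add: diff_divide_distrib[symmetric] abs_divide)
  define K where "K = (\<Sum>l<M. \<bar>kappa N (\<lambda>j. ramp R M l (x j)) - kappa N (\<lambda>j. ramp R M l (y j))\<bar>)"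
  have "(\<Sum>j<N. \<bar>x j - y j\<bar>) \<le> N * (3 * \<eta> + \<eta> * K)"
    using main unfolding k K_def[symmetric] by (simp add: algebra_simps)
  then show ?thesis unfolding \<eta>_def[symmetric] K_def[symmetric] using N
    by (simp add: pos_divide_le_eq mult.commute)
qed

lemma PC_meas:
  assumes "\<mu> \<in> ProbCube R" "continuous_on (cube R) g"
  shows "g \<in> borel_measurable \<mu>"
proof -
  have "g \<in> borel_measurable (restrict_space borel (cube R))"
    by (rule borel_measurable_continuous_on_restrict[OF assms(2)])
  moreover have "sets \<mu> = sets (restrict_space borel (cube R))" using assms(1) unfolding ProbCube_def by auto
  ultimately show ?thesis using measurable_cong_sets[of \<mu> "restrict_space borel (cube R)" borel borel] by simp
qed

lemma PC_int:
  fixes g :: "real^'n \<Rightarrow> real"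
  assumes "\<mu> \<in> ProbCube R" "continuous_on (cube R) g"
  shows "integrable \<mu> g"
proof -
  interpret prob_space \<mu> using assms(1) unfolding ProbCube_def by auto
  have "compact (g ` cube R)" by (rule compact_continuous_image[OF assms(2) compact_cube])
  then obtain B where B: "\<And>x. x \<in> g ` cube R \<Longrightarrow> norm x \<le> B"
    using compact_imp_bounded bounded_pos by metis
  have sp: "space \<mu> = cube R" using assms(1) unfolding ProbCube_def by auto
  show ?thesis
    by (rule integrable_const_bound[where B=B]) (use B sp PC_meas[OF assms] in auto)
qed

lemma cont_coord:
  assumes "continuous_on {-R..R} f"
  shows "continuous_on (cube R) (\<lambda>x::real^'n. f (x$i))"
proof (rule continuous_on_compose2[OF assms])
  show "continuous_on (cube R) (\<lambda>x::real^'n. x$i)" by (intro continuous_intros)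
  show "(\<lambda>x::real^'n. x$i) ` cube R \<subseteq> {-R..R}" by (auto simp: cube_def)
qed

lemma integral_marginal:
  fixes \<mu> :: "(real^'n) measure"
  assumes "\<mu> \<in> ProbCube R"
  shows "integral\<^sup>L (marginal i \<mu>) (\<lambda>x. x^k) = (\<integral>x. (x$i)^k \<partial>\<mu>)"
proof -
  have "(\<lambda>x::real^'n. x$i) \<in> borel_measurable \<mu>"
    by (rule PC_meas[OF assms]) (intro continuous_intros)
  then show ?thesis unfolding marginal_def by (subst integral_distr) auto
qed

lemma kappa_diff_le:
  assumes "\<And>j. j < N \<Longrightarrow> \<bar>u j - v j\<bar> \<le> e" "e \<ge> 0"
  shows "\<bar>kappa N u - kappa N v\<bar> \<le> e"
proof (cases "N = 0")
  case True then show ?thesis using assms by (simp add: kappa_def)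
next
  case False
  have "\<bar>(\<Sum>j<N. u j) - (\<Sum>j<N. v j)\<bar> \<le> (\<Sum>j<N. \<bar>u j - v j\<bar>)"
    by (simp add: sum_subtractf[symmetric] sum_abs)
  also have "\<dots> \<le> (\<Sum>j<N. e)" using assms by (intro sum_mono) auto
  finally have "\<bar>(\<Sum>j<N. u j) - (\<Sum>j<N. v j)\<bar> \<le> N * e" by simp
  then show ?thesis using False unfolding kappa_def
    by (simp add: diff_divide_distrib[symmetric] abs_divide pos_divide_le_eq mult.commute)
qed

lemma kappa_poly:
  "kappa N (\<lambda>j. \<Sum>k\<le>n. a k * (x j)^k) = (\<Sum>k\<le>n. a k * kappa N (\<lambda>j. (x j)^k))"
  unfolding kappa_def by (simp add: sum_divide_distrib sum_distrib_left sum.swap[of _ "{..<N}"] algebra_simps)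

lemma approx_conv:
  fixes \<mu> :: "(real^'n) measure"
  assumes mu: "\<mu> \<in> ProbCube R" and ap: "approx_seq R (\<lambda>i. marginal i \<mu>) \<Xi>"
    and f: "continuous_on {-R..R} f"
  shows "(\<lambda>N. kappa N (\<lambda>j. f (\<Xi> N i j))) \<longlonglongrightarrow> (\<integral>x. f (x$i) \<partial>\<mu>)"
proof (rule tendstoI)
  fix e :: real assume e: "e > 0"
  interpret prob_space \<mu> using mu unfolding ProbCube_def by auto
  have sp: "space \<mu> = cube R" using mu unfolding ProbCube_def by auto
  obtain g where g: "real_polynomial_function g" "\<And>x. x \<in> {-R..R} \<Longrightarrow> \<bar>f x - g x\<bar> < e/3"
    using Stone_Weierstrass_real_polynomial_function[of "{-R..R}" f "e/3"] f e by auto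
  obtain a n where gs: "g = (\<lambda>x. \<Sum>k\<le>n. a k * x^k)" using g(1) real_polynomial_function_iff_sum by metis
  have gc: "continuous_on {-R..R} g" unfolding gs by (intro continuous_intros)
  have rng: "\<And>N j. j < N \<Longrightarrow> \<Xi> N i j \<in> {-R..R}" using ap unfolding approx_seq_def by auto
  have mom: "\<And>k. (\<lambda>N. kappa N (\<lambda>j. (\<Xi> N i j)^k)) \<longlonglongrightarrow> (\<integral>x. (x$i)^k \<partial>\<mu>)"
    using ap integral_marginal[OF mu] unfolding approx_seq_def by metis
  have intk: "\<And>k. integrable \<mu> (\<lambda>x. (x$i)^k)"
    by (rule PC_int[OF mu]) (intro continuous_intros)
  have "(\<lambda>N. kappa N (\<lambda>j. g (\<Xi> N i j))) \<longlonglongrightarrow> (\<Sum>k\<le>n. a k * (\<integral>x. (x$i)^k \<partial>\<mu>))"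
    unfolding gs kappa_poly by (intro tendsto_intros mom)
  also have "(\<Sum>k\<le>n. a k * (\<integral>x. (x$i)^k \<partial>\<mu>)) = (\<integral>x. g (x$i) \<partial>\<mu>)"
    unfolding gs using intk by (simp add: integral_sum integral_mult_right)
  finally have gl: "(\<lambda>N. kappa N (\<lambda>j. g (\<Xi> N i j))) \<longlonglongrightarrow> (\<integral>x. g (x$i) \<partial>\<mu>)" .
  have ev: "eventually (\<lambda>N. dist (kappa N (\<lambda>j. g (\<Xi> N i j))) (\<integral>x. g (x$i) \<partial>\<mu>) < e/3) sequentially"
    using tendstoD[OF gl, of "e/3"] e by simp
  have fi: "integrable \<mu> (\<lambda>x. f (x$i))" by (rule PC_int[OF mu cont_coord[OF f]])
  have gi: "integrable \<mu> (\<lambda>x. g (x$i))" by (rule PC_int[OF mu cont_coord[OF gc]])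
  have pt: "\<And>x. x \<in> space \<mu> \<Longrightarrow> \<bar>f (x$i) - g (x$i)\<bar> \<le> e/3"
    using g(2) sp unfolding cube_def by (auto intro: less_imp_le)
  have pt1: "\<And>x. x \<in> space \<mu> \<Longrightarrow> f (x$i) \<le> g (x$i) + e/3"
   and pt2: "\<And>x. x \<in> space \<mu> \<Longrightarrow> g (x$i) \<le> f (x$i) + e/3"
    using pt by (metis abs_le_D1 abs_minus_commute diff_le_eq add.commute)+
  have "(\<integral>x. f (x$i) \<partial>\<mu>) \<le> (\<integral>x. g (x$i) + e/3 \<partial>\<mu>)"
    using pt1 by (intro integral_mono fi) (auto intro: gi)
  moreover have "(\<integral>x. g (x$i) \<partial>\<mu>) \<le> (\<integral>x. f (x$i) + e/3 \<partial>\<mu>)"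
    using pt2 by (intro integral_mono gi) (auto intro: fi)
  ultimately have ifg: "\<bar>(\<integral>x. f (x$i) \<partial>\<mu>) - (\<integral>x. g (x$i) \<partial>\<mu>)\<bar> \<le> e/3"
    using gi fi prob_space by (simp, auto simp: abs_if)
  have kfg: "\<bar>kappa N (\<lambda>j. f (\<Xi> N i j)) - kappa N (\<lambda>j. g (\<Xi> N i j))\<bar> \<le> e/3" for N
    using g(2) rng e by (intro kappa_diff_le) (auto intro: less_imp_le)
  show "eventually (\<lambda>N. dist (kappa N (\<lambda>j. f (\<Xi> N i j))) (\<integral>x. f (x$i) \<partial>\<mu>) < e) sequentially"
  proof (rule eventually_mono[OF ev])
    fix N assume "dist (kappa N (\<lambda>j. g (\<Xi> N i j))) (\<integral>x. g (x$i) \<partial>\<mu>) < e/3"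
    then show "dist (kappa N (\<lambda>j. f (\<Xi> N i j))) (\<integral>x. f (x$i) \<partial>\<mu>) < e"
      using kfg[of N] ifg unfolding dist_real_def by linarith
  qed
qed

definition gfun :: "real \<Rightarrow> nat \<Rightarrow> (real \<Rightarrow> real) \<Rightarrow> real \<Rightarrow> real" where
  "gfun R L f x = f (gridpt R L L) - (\<Sum>l<L. ind (x \<le> gridpt R L l) * (f (gridpt R L (Suc l)) - f (gridpt R L l)))"

lemma gfun_close:
  assumes R: "R > 0" and L: "L > 0" and x: "-R \<le> x" "x \<le> R"
    and w: "\<And>x y. x \<in> {-R..R} \<Longrightarrow> y \<in> {-R..R} \<Longrightarrow> \<bar>x - y\<bar> \<le> 2*R/L \<Longrightarrow> \<bar>f x - f y\<bar> \<le> w"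
  shows "\<bar>gfun R L f x - f x\<bar> \<le> w"
proof -
  define \<eta> where "\<eta> = 2*R/L"
  have eta: "\<eta> > 0" using R L by (simp add: \<eta>_def)
  have grid: "gridpt R L l = -R + l * \<eta>" for l unfolding gridpt_def \<eta>_def by simp
  define a where "a = nat \<lceil>(x+R)/\<eta>\<rceil>"
  have nn: "(x+R)/\<eta> \<ge> 0" using x eta by simp
  have "(x+R)/\<eta> \<le> 2*R/\<eta>" using x eta by (intro divide_right_mono) auto
  also have "2*R/\<eta> = L" using L R by (simp add: \<eta>_def)
  finally have aL: "a \<le> L" unfolding a_def by (simp add: ceiling_le_iff nat_le_iff)
  have aup: "(x+R)/\<eta> \<le> a" and alo: "a < (x+R)/\<eta> + 1" unfolding a_def using nn
    by (simp_all add: ceiling_correct) linarith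
  have iff: "x \<le> gridpt R L l \<longleftrightarrow> a \<le> l" for l
  proof
    assume "x \<le> gridpt R L l"
    then have "(x+R)/\<eta> \<le> l" using eta unfolding grid by (simp add: field_simps)
    then show "a \<le> l" unfolding a_def by (simp add: ceiling_le_iff nat_le_iff)
  next
    assume "a \<le> l"
    then have "(x+R)/\<eta> \<le> l" using aup by linarith
    then show "x \<le> gridpt R L l" using eta unfolding grid by (simp add: field_simps)
  qed
  have "(\<Sum>l<L. ind (x \<le> gridpt R L l) * (f (gridpt R L (Suc l)) - f (gridpt R L l)))
      = (\<Sum>l\<in>{l\<in>{..<L}. a \<le> l}. f (gridpt R L (Suc l)) - f (gridpt R L l))"
    by (subst sum.inter_filter) (auto simp: ind_def iff intro!: sum.cong)
  also have "{l\<in>{..<L}. a \<le> l} = {a..<L}" by auto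
  also have "(\<Sum>l\<in>{a..<L}. f (gridpt R L (Suc l)) - f (gridpt R L l)) = f (gridpt R L L) - f (gridpt R L a)"
    by (rule sum_Suc_diff'[OF aL])
  finally have ga: "gfun R L f x = f (gridpt R L a)" unfolding gfun_def by simp
  have "gridpt R L a \<in> {-R..R}"
  proof -
    have "real a * \<eta> \<le> L * \<eta>" using aL eta by (intro mult_right_mono) auto
    also have "L * \<eta> = 2*R" using L by (simp add: \<eta>_def)
    finally show ?thesis unfolding grid using eta by auto
  qed
  moreover have "\<bar>gridpt R L a - x\<bar> \<le> 2*R/L"
  proof -
    have "x + R \<le> a * \<eta>" "a * \<eta> < x + R + \<eta>" using aup alo eta by (simp_all add: field_simps)
    then show ?thesis unfolding grid \<eta>_def[symmetric] by auto
  qed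
  ultimately show ?thesis unfolding ga using w x by auto
qed

lemma gridpt_mono: "R > 0 \<Longrightarrow> L > 0 \<Longrightarrow> gridpt R L a \<le> gridpt R L b \<longleftrightarrow> a \<le> b"
  unfolding gridpt_def by (simp add: field_simps)

lemma gridpt_range: "R > 0 \<Longrightarrow> L > 0 \<Longrightarrow> a \<le> L \<Longrightarrow> -R \<le> gridpt R L a \<and> gridpt R L a \<le> R"
proof -
  assume R: "R > 0" and L: "L > 0" and a: "a \<le> L"
  have "real a * (2*R/L) \<le> L * (2*R/L)" using a R by (intro mult_right_mono) auto
  also have "L * (2*R/L) = 2*R" using L by simp
  finally show ?thesis unfolding gridpt_def using R by auto
qed

definition Gv :: "(real^'n) measure \<Rightarrow> 'n \<Rightarrow> real \<Rightarrow> nat \<Rightarrow> nat \<Rightarrow> real" where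
  "Gv \<mu> i R L l = (\<integral>x. ind (x$i \<le> gridpt R L l) \<partial>\<mu>)"

definition cnt :: "(real^'n) measure \<Rightarrow> 'n \<Rightarrow> real \<Rightarrow> nat \<Rightarrow> nat \<Rightarrow> nat \<Rightarrow> nat" where
  "cnt \<mu> i R L N l = nat \<lfloor>real N * Gv \<mu> i R L l\<rfloor>"

definition qvec :: "(real^'n) measure \<Rightarrow> 'n \<Rightarrow> real \<Rightarrow> nat \<Rightarrow> nat \<Rightarrow> nat \<Rightarrow> real" where
  "qvec \<mu> i R L N j = gridpt R L (card {l. l < L \<and> cnt \<mu> i R L N l \<le> j})"

lemma ind_meas:
  fixes \<mu> :: "(real^'n) measure"
  assumes mu: "\<mu> \<in> ProbCube R"
  shows "(\<lambda>x. ind (x$i \<le> t)) \<in> borel_measurable \<mu>"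
proof -
  have c: "(\<lambda>x::real^'n. x$i) \<in> borel_measurable \<mu>"
    by (rule PC_meas[OF mu]) (intro continuous_intros)
  have "(\<lambda>x. indicator {..t} (x$i) :: real) \<in> borel_measurable \<mu>"
    by (rule measurable_compose[OF c]) simp
  moreover have "(\<lambda>x. ind (x$i \<le> t)) = (\<lambda>x. indicator {..t} (x$i) :: real)"
    by (auto simp: ind_def indicator_def)
  ultimately show ?thesis by simp
qed

lemma ind_int:
  fixes \<mu> :: "(real^'n) measure"
  assumes mu: "\<mu> \<in> ProbCube R"
  shows "integrable \<mu> (\<lambda>x. ind (x$i \<le> t))"
proof -
  interpret prob_space \<mu> using mu unfolding ProbCube_def by auto
  show ?thesis
    apply (rule integrable_const_bound[where B=1])
     apply (auto simp: ind_def)[1]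
    by (rule ind_meas[OF mu])
qed

lemma Gv_props:
  fixes \<mu> :: "(real^'n) measure"
  assumes mu: "\<mu> \<in> ProbCube R" and R: "R > 0" and L: "L > 0"
  shows "0 \<le> Gv \<mu> i R L l" "Gv \<mu> i R L l \<le> 1" "l \<le> l' \<Longrightarrow> Gv \<mu> i R L l \<le> Gv \<mu> i R L l'"
proof -
  interpret prob_space \<mu> using mu unfolding ProbCube_def by auto
  show "0 \<le> Gv \<mu> i R L l" unfolding Gv_def by (rule Bochner_Integration.integral_nonneg) (auto simp: ind_def)
  have "Gv \<mu> i R L l \<le> (\<integral>x. 1 \<partial>\<mu>)" unfolding Gv_def
    by (rule integral_mono[OF ind_int[OF mu]]) (auto simp: ind_def)
  then show "Gv \<mu> i R L l \<le> 1" by (simp add: prob_space)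
  assume "l \<le> l'"
  then have "gridpt R L l \<le> gridpt R L l'" using gridpt_mono[OF R L] by simp
  then show "Gv \<mu> i R L l \<le> Gv \<mu> i R L l'" unfolding Gv_def
    by (intro integral_mono ind_int[OF mu]) (auto simp: ind_def)
qed

lemma cnt_props:
  fixes \<mu> :: "(real^'n) measure"
  assumes mu: "\<mu> \<in> ProbCube R" and R: "R > 0" and L: "L > 0"
  shows "cnt \<mu> i R L N l \<le> N" "l \<le> l' \<Longrightarrow> cnt \<mu> i R L N l \<le> cnt \<mu> i R L N l'"
    "\<bar>real (cnt \<mu> i R L N l) - real N * Gv \<mu> i R L l\<bar> \<le> 1"
proof -
  note G = Gv_props[OF mu R L]
  have "real N * Gv \<mu> i R L l \<le> real N" using G(2)[of i l] by (simp add: mult_left_le)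
  then have "\<lfloor>real N * Gv \<mu> i R L l\<rfloor> \<le> \<lfloor>real N\<rfloor>" by (rule floor_mono)
  then have "nat \<lfloor>real N * Gv \<mu> i R L l\<rfloor> \<le> nat \<lfloor>real N\<rfloor>" by (rule nat_mono)
  then show "cnt \<mu> i R L N l \<le> N" unfolding cnt_def by simp
  have nn: "0 \<le> real N * Gv \<mu> i R L l" using G(1)[of i l] by simp
  then have fl: "0 \<le> \<lfloor>real N * Gv \<mu> i R L l\<rfloor>" by simp
  have eq: "real (cnt \<mu> i R L N l) = real_of_int \<lfloor>real N * Gv \<mu> i R L l\<rfloor>"
    unfolding cnt_def using fl by simp
  have "real_of_int \<lfloor>real N * Gv \<mu> i R L l\<rfloor> \<le> real N * Gv \<mu> i R L l"
       "real N * Gv \<mu> i R L l < real_of_int \<lfloor>real N * Gv \<mu> i R L l\<rfloor> + 1"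
    by linarith+
  then show "\<bar>real (cnt \<mu> i R L N l) - real N * Gv \<mu> i R L l\<bar> \<le> 1" unfolding eq
    by linarith
  assume "l \<le> l'"
  then have "real N * Gv \<mu> i R L l \<le> real N * Gv \<mu> i R L l'" using G(3) by (simp add: mult_left_mono)
  then show "cnt \<mu> i R L N l \<le> cnt \<mu> i R L N l'" unfolding cnt_def by (intro nat_mono floor_mono)
qed

lemma qvec_key:
  fixes \<mu> :: "(real^'n) measure"
  assumes mu: "\<mu> \<in> ProbCube R" and R: "R > 0" and L: "L > 0" and l: "l < L"
  shows "qvec \<mu> i R L N j \<le> gridpt R L l \<longleftrightarrow> j < cnt \<mu> i R L N l"
proof -
  define S where "S = {l. l < L \<and> cnt \<mu> i R L N l \<le> j}"
  note c = cnt_props[OF mu R L]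
  have "card S \<le> l \<longleftrightarrow> j < cnt \<mu> i R L N l"
  proof
    assume "card S \<le> l"
    show "j < cnt \<mu> i R L N l"
    proof (rule ccontr)
      assume "\<not> ?thesis"
      have "{..l} \<subseteq> S"
      proof
        fix l' assume "l' \<in> {..l}"
        then show "l' \<in> S" using c(2)[of l' l i N] l \<open>\<not> j < cnt \<mu> i R L N l\<close> by (auto simp: S_def)
      qed
      then have "card {..l} \<le> card S" by (intro card_mono) (auto simp: S_def)
      then show False using \<open>card S \<le> l\<close> by simp
    qed
  next
    assume j: "j < cnt \<mu> i R L N l"
    have "S \<subseteq> {..<l}"
    proof
      fix l' assume "l' \<in> S"
      then have "cnt \<mu> i R L N l' \<le> j" by (auto simp: S_def)
      then show "l' \<in> {..<l}" using j c(2)[of l l' i N] by (cases "l \<le> l'") auto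
    qed
    then show "card S \<le> l" using card_mono[of "{..<l}" S] by simp
  qed
  then show ?thesis unfolding qvec_def S_def[symmetric] using gridpt_mono[OF R L] by simp
qed

lemma qvec_range_sorted:
  fixes \<mu> :: "(real^'n) measure"
  assumes R: "R > 0" and L: "L > 0"
  shows "-R \<le> qvec \<mu> i R L N j \<and> qvec \<mu> i R L N j \<le> R"
    "j \<le> k \<Longrightarrow> qvec \<mu> i R L N j \<le> qvec \<mu> i R L N k"
proof -
  have "card {l. l < L \<and> cnt \<mu> i R L N l \<le> j} \<le> card {..<L}" by (intro card_mono) auto
  then show "-R \<le> qvec \<mu> i R L N j \<and> qvec \<mu> i R L N j \<le> R"
    unfolding qvec_def using gridpt_range[OF R L] by simp
  assume "j \<le> k"
  then have "card {l. l < L \<and> cnt \<mu> i R L N l \<le> j} \<le> card {l. l < L \<and> cnt \<mu> i R L N l \<le> k}"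
    by (intro card_mono) auto
  then show "qvec \<mu> i R L N j \<le> qvec \<mu> i R L N k" unfolding qvec_def using gridpt_mono[OF R L] by simp
qed

lemma qvec_count:
  fixes \<mu> :: "(real^'n) measure"
  assumes mu: "\<mu> \<in> ProbCube R" and R: "R > 0" and L: "L > 0" and l: "l < L"
  shows "(\<Sum>j<N. ind (qvec \<mu> i R L N j \<le> gridpt R L l)) = real (cnt \<mu> i R L N l)"
proof -
  have "(\<Sum>j<N. ind (qvec \<mu> i R L N j \<le> gridpt R L l)) = (\<Sum>j<N. ind (j < cnt \<mu> i R L N l))"
    using qvec_key[OF mu R L l] by simp
  also have "\<dots> = (\<Sum>j\<in>{..<cnt \<mu> i R L N l}. 1)"
    using cnt_props(1)[OF mu R L, of i N l]
    by (intro sum.mono_neutral_cong_right) (auto simp: ind_def)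
  finally show ?thesis by simp
qed

lemma qvec_est:
  fixes \<mu> :: "(real^'n) measure"
  assumes mu: "\<mu> \<in> ProbCube R" and R: "R > 0" and L: "L > 0" and N: "N > 0"
    and f: "continuous_on {-R..R} f"
    and w: "\<And>x y. x \<in> {-R..R} \<Longrightarrow> y \<in> {-R..R} \<Longrightarrow> \<bar>x - y\<bar> \<le> 2*R/L \<Longrightarrow> \<bar>f x - f y\<bar> \<le> w"
    and B: "\<And>x. x \<in> {-R..R} \<Longrightarrow> \<bar>f x\<bar> \<le> B"
  shows "\<bar>kappa N (\<lambda>j. f (qvec \<mu> i R L N j)) - (\<integral>x. f (x$i) \<partial>\<mu>)\<bar> \<le> 2*w + 2*B*L/N"
proof -
  interpret prob_space \<mu> using mu unfolding ProbCube_def by auto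
  have sp: "space \<mu> = cube R" using mu unfolding ProbCube_def by auto
  define s where "s = gridpt R L"
  define D where "D l = f (s (Suc l)) - f (s l)" for l
  define q where "q = qvec \<mu> i R L N"
  have w0: "w \<ge> 0" using w[of "-R" "-R"] R by auto
  have qr: "\<And>j. q j \<in> {-R..R}" unfolding q_def using qvec_range_sorted(1)[OF R L] by auto
  have sr: "\<And>l. l \<le> L \<Longrightarrow> s l \<in> {-R..R}" unfolding s_def using gridpt_range[OF R L] by auto
  have Db: "\<bar>D l\<bar> \<le> 2*B" if "l < L" for l
    using B[OF sr[of l]] B[OF sr[of "Suc l"]] that unfolding D_def by auto
  have gf: "gfun R L f x = f (s L) - (\<Sum>l<L. ind (x \<le> s l) * D l)" for x
    unfolding gfun_def s_def D_def by simp
  have gc: "\<bar>gfun R L f x - f x\<bar> \<le> w" if "x \<in> {-R..R}" for x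
    using that by (intro gfun_close[OF R L]) (auto intro: w)
  have e1: "\<bar>kappa N (\<lambda>j. f (q j)) - kappa N (\<lambda>j. gfun R L f (q j))\<bar> \<le> w"
    using gc qr w0 by (intro kappa_diff_le) (auto simp: abs_minus_commute)
  have "(\<Sum>j<N. gfun R L f (q j)) = N * f (s L) - (\<Sum>l<L. (\<Sum>j<N. ind (q j \<le> s l)) * D l)"
    unfolding gf by (simp add: sum_subtractf sum_distrib_right sum.swap[of _ "{..<N}" "{..<L}"])
  also have "\<dots> = N * f (s L) - (\<Sum>l<L. real (cnt \<mu> i R L N l) * D l)"
    unfolding q_def s_def using qvec_count[OF mu R L] by simp
  finally have k2: "kappa N (\<lambda>j. gfun R L f (q j)) = f (s L) - (\<Sum>l<L. real (cnt \<mu> i R L N l) / N * D l)"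
    unfolding kappa_def using N by (simp add: diff_divide_distrib sum_divide_distrib)
  have ii: "\<And>l. integrable \<mu> (\<lambda>x. ind (x$i \<le> s l) * D l)"
    using ind_int[OF mu] by simp
  have i3: "(\<integral>x. gfun R L f (x$i) \<partial>\<mu>) = f (s L) - (\<Sum>l<L. Gv \<mu> i R L l * D l)"
    unfolding gf using ii
    by (simp add: integral_diff integral_sum Gv_def s_def prob_space integral_mult_left_zero)
  have gi: "integrable \<mu> (\<lambda>x. gfun R L f (x$i))"
    unfolding gf using ii by (intro Bochner_Integration.integrable_diff Bochner_Integration.integrable_sum) auto
  have "\<bar>kappa N (\<lambda>j. gfun R L f (q j)) - (\<integral>x. gfun R L f (x$i) \<partial>\<mu>)\<bar>
        = \<bar>\<Sum>l<L. (Gv \<mu> i R L l - real (cnt \<mu> i R L N l) / N) * D l\<bar>"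
    unfolding k2 i3 by (simp add: sum_subtractf[symmetric] left_diff_distrib)
  also have "\<dots> \<le> (\<Sum>l<L. \<bar>(Gv \<mu> i R L l - real (cnt \<mu> i R L N l) / N) * D l\<bar>)"
    by (rule sum_abs)
  also have "\<dots> \<le> (\<Sum>l<L. (1/N) * (2*B))"
  proof (rule sum_mono)
    fix l assume l: "l \<in> {..<L}"
    have "\<bar>Gv \<mu> i R L l - real (cnt \<mu> i R L N l) / N\<bar> = \<bar>real (cnt \<mu> i R L N l) - real N * Gv \<mu> i R L l\<bar> / N"
    proof -
      have "Gv \<mu> i R L l - real (cnt \<mu> i R L N l) / N = (real N * Gv \<mu> i R L l - real (cnt \<mu> i R L N l)) / N"
        using N by (simp add: diff_divide_distrib)
      then show ?thesis by (simp add: abs_divide abs_minus_commute)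
    qed
    also have "\<dots> \<le> 1/N" using cnt_props(3)[OF mu R L, of i N l] N by (simp add: divide_right_mono)
    finally show "\<bar>(Gv \<mu> i R L l - real (cnt \<mu> i R L N l) / N) * D l\<bar> \<le> (1/N) * (2*B)"
      unfolding abs_mult using Db[of l] l by (intro mult_mono) auto
  qed
  also have "\<dots> = 2*B*L/N" by simp
  finally have e4: "\<bar>kappa N (\<lambda>j. gfun R L f (q j)) - (\<integral>x. gfun R L f (x$i) \<partial>\<mu>)\<bar> \<le> 2*B*L/N" .
  have fi: "integrable \<mu> (\<lambda>x. f (x$i))" by (rule PC_int[OF mu cont_coord[OF f]])
  have pt: "\<And>x. x \<in> space \<mu> \<Longrightarrow> \<bar>gfun R L f (x$i) - f (x$i)\<bar> \<le> w"
    using gc sp unfolding cube_def by auto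
  have pt1: "\<And>x. x \<in> space \<mu> \<Longrightarrow> gfun R L f (x$i) \<le> f (x$i) + w"
   and pt2: "\<And>x. x \<in> space \<mu> \<Longrightarrow> f (x$i) \<le> gfun R L f (x$i) + w"
    using pt by (metis abs_le_D1 abs_minus_commute diff_le_eq add.commute)+
  have m1: "(\<integral>x. gfun R L f (x$i) \<partial>\<mu>) \<le> (\<integral>x. f (x$i) + w \<partial>\<mu>)"
    using pt1 by (intro integral_mono gi) (auto intro: fi)
  have m2: "(\<integral>x. f (x$i) \<partial>\<mu>) \<le> (\<integral>x. gfun R L f (x$i) + w \<partial>\<mu>)"
    using pt2 by (intro integral_mono fi) (auto intro: gi)
  have e5: "\<bar>(\<integral>x. gfun R L f (x$i) \<partial>\<mu>) - (\<integral>x. f (x$i) \<partial>\<mu>)\<bar> \<le> w"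
  proof -
    have c1: "(\<integral>x. f (x$i) + w \<partial>\<mu>) = (\<integral>x. f (x$i) \<partial>\<mu>) + w"
      using fi by (simp add: Bochner_Integration.integral_add prob_space)
    have c2: "(\<integral>x. gfun R L f (x$i) + w \<partial>\<mu>) = (\<integral>x. gfun R L f (x$i) \<partial>\<mu>) + w"
      using gi by (simp add: Bochner_Integration.integral_add prob_space)
    show ?thesis using m1 m2 unfolding c1 c2 abs_le_iff by linarith
  qed
  show ?thesis using e1 e4 e5 unfolding q_def by linarith
qed


definition Lf :: "nat \<Rightarrow> nat" where "Lf N = nat \<lfloor>sqrt (real N)\<rfloor> + 1"

definition Xq :: "(real^'n) measure \<Rightarrow> real \<Rightarrow> nat \<Rightarrow> 'n \<Rightarrow> nat \<Rightarrow> real" where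
  "Xq \<mu> R = (\<lambda>N i j. qvec \<mu> i R (Lf N) N j)"

lemma Xq_conv:
  fixes \<mu> :: "(real^'n) measure"
  assumes mu: "\<mu> \<in> ProbCube R" and R: "R > 0" and f: "continuous_on {-R..R} f"
  shows "(\<lambda>N. kappa N (\<lambda>j. f (Xq \<mu> R N i j))) \<longlonglongrightarrow> (\<integral>x. f (x$i) \<partial>\<mu>)"
proof (rule tendstoI)
  fix e :: real assume e: "e > 0"
  have "uniformly_continuous_on {-R..R} f" by (rule compact_uniformly_continuous[OF f compact_Icc])
  then obtain \<delta> where \<delta>: "\<delta> > 0" "\<And>x x'. x \<in> {-R..R} \<Longrightarrow> x' \<in> {-R..R} \<Longrightarrow> dist x' x < \<delta> \<Longrightarrow> dist (f x') (f x) < e/4"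
    using e unfolding uniformly_continuous_on_def by (metis zero_less_divide_iff zero_less_numeral)
  have "compact (f ` {-R..R})" by (rule compact_continuous_image[OF f compact_Icc])
  then obtain B where B: "B > 0" "\<And>x. x \<in> f ` {-R..R} \<Longrightarrow> norm x \<le> B"
    using compact_imp_bounded bounded_pos by metis
  define T where "T = max (2*R/\<delta>) (16*B/e) + 1"
  have T1: "T \<ge> 1" and T2: "T > 2*R/\<delta>" and T3: "T > 16*B/e"
  proof -
    have "2*R/\<delta> > 0" using R \<delta> by simp
    then have "max (2*R/\<delta>) (16*B/e) \<ge> 2*R/\<delta>" "max (2*R/\<delta>) (16*B/e) \<ge> 16*B/e" by auto
    then show "T \<ge> 1" "T > 2*R/\<delta>" "T > 16*B/e" unfolding T_def using \<open>2*R/\<delta> > 0\<close> by auto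
  qed
  show "eventually (\<lambda>N. dist (kappa N (\<lambda>j. f (Xq \<mu> R N i j))) (\<integral>x. f (x$i) \<partial>\<mu>) < e) sequentially"
    unfolding eventually_sequentially
  proof (intro exI[of _ "nat \<lceil>T^2\<rceil> + 1"] allI impI)
    fix N assume N: "nat \<lceil>T^2\<rceil> + 1 \<le> N"
    then have NT: "real N \<ge> T^2" by linarith
    have N0: "N > 0" using N by simp
    define r where "r = sqrt (real N)"
    have rT: "r \<ge> T" unfolding r_def using NT T1 real_le_rsqrt by blast
    have r0: "r > 0" using rT T1 by simp
    have rr: "r * r = real N" unfolding r_def by simp
    define L where "L = Lf N"
    have L0: "L > 0" unfolding L_def Lf_def by simp
    have Lr: "real L > r" "real L \<le> r + 1" unfolding L_def Lf_def r_def
      by (simp_all add: of_nat_nat) linarith+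
    have w: "\<bar>f x - f y\<bar> \<le> e/4" if "x \<in> {-R..R}" "y \<in> {-R..R}" "\<bar>x - y\<bar> \<le> 2*R/L" for x y
    proof -
      have "2*R/\<delta> < real L" using T2 rT Lr by linarith
      then have "2*R/L < \<delta>" using \<delta> L0 by (simp add: field_simps)
      then have "dist x y < \<delta>" using that(3) by (simp add: dist_real_def)
      then show ?thesis using \<delta>(2)[OF that(2) that(1)] by (simp add: dist_real_def abs_minus_commute)
    qed
    have Bf: "\<bar>f x\<bar> \<le> B" if "x \<in> {-R..R}" for x using B(2) that by auto
    have est: "\<bar>kappa N (\<lambda>j. f (qvec \<mu> i R L N j)) - (\<integral>x. f (x$i) \<partial>\<mu>)\<bar> \<le> 2*(e/4) + 2*B*L/N"
      by (rule qvec_est[OF mu R L0 N0 f w Bf]) auto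
    have "2*B*L/N \<le> 2*B*(2*r)/(r*r)"
      unfolding rr[symmetric] using Lr r0 B T1 rT by (intro divide_right_mono mult_left_mono) auto
    also have "\<dots> = 4*B/r" using r0 by (simp add: field_simps)
    also have "\<dots> \<le> 4*B/T" using r0 T1 rT B by (intro divide_left_mono) auto
    also have "\<dots> < e/4"
    proof -
      have "16*B < T*e" using T3 e by (simp add: field_simps)
      then show ?thesis using T1 by (simp add: field_simps)
    qed
    finally have "2*B*L/N < e/4" .
    then show "dist (kappa N (\<lambda>j. f (Xq \<mu> R N i j))) (\<integral>x. f (x$i) \<partial>\<mu>) < e"
      using est unfolding dist_real_def Xq_def L_def by simp
  qed
qed

lemma approx_exists:
  fixes \<mu> :: "(real^'n) measure"
  assumes mu: "\<mu> \<in> ProbCube R" and R: "R > 0"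
  shows "approx_seq R (\<lambda>i. marginal i \<mu>) (Xq \<mu> R)"
proof -
  have L0: "\<And>N. Lf N > 0" unfolding Lf_def by simp
  have r: "\<forall>N i. (\<forall>j<N. -R \<le> Xq \<mu> R N i j \<and> Xq \<mu> R N i j \<le> R) \<and>
            (\<forall>j k. j \<le> k \<and> k < N \<longrightarrow> Xq \<mu> R N i j \<le> Xq \<mu> R N i k)"
    unfolding Xq_def using qvec_range_sorted[OF R L0] by blast
  have m: "\<forall>i k. (\<lambda>N. kappa N (\<lambda>j. (Xq \<mu> R N i j) ^ k)) \<longlonglongrightarrow> integral\<^sup>L (marginal i \<mu>) (\<lambda>x. x ^ k)"
  proof (intro allI)
    fix i :: 'n and k :: nat
    have "continuous_on {-R..R} (\<lambda>x::real. x^k)" by (intro continuous_intros)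
    from Xq_conv[OF mu R this, of i]
    show "(\<lambda>N. kappa N (\<lambda>j. Xq \<mu> R N i j ^ k)) \<longlonglongrightarrow> integral\<^sup>L (marginal i \<mu>) (\<lambda>x. x ^ k)"
      unfolding integral_marginal[OF mu] .
  qed
  show ?thesis unfolding approx_seq_def using r m by blast
qed

lemma some_approx:
  fixes \<mu> :: "(real^'n) measure"
  assumes "\<mu> \<in> ProbCube R" "R > 0"
  shows "approx_seq R (\<lambda>i. marginal i \<mu>) (SOME \<Xi>. approx_seq R (\<lambda>i. marginal i \<mu>) \<Xi>)"
  by (rule someI[of _ "Xq \<mu> R"]) (rule approx_exists[OF assms])

lemma pt_bound:
  fixes h :: "real^'n \<Rightarrow> real"
  assumes h: "continuous_on (cube R) h"
    and rng: "\<And>N i j. j < N \<Longrightarrow> -R \<le> \<Xi> N i j \<and> \<Xi> N i j \<le> R"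
  shows "\<exists>B. \<forall>N. \<bar>pressure_term h \<Xi> N\<bar> \<le> B"
proof -
  have "compact (h ` cube R)" by (rule compact_continuous_image[OF h compact_cube])
  then obtain B where B: "B > 0" "\<And>x. x \<in> h ` cube R \<Longrightarrow> norm x \<le> B"
    using compact_imp_bounded bounded_pos by metis
  show ?thesis
  proof (intro exI allI)
    fix N :: nat
    show "\<bar>pressure_term h \<Xi> N\<bar> \<le> B"
    proof (cases "N = 0")
      case True then show ?thesis using B by (simp add: pressure_term_def)
    next
      case False
      then have N: "real N > 0" by simp
      define S where "S = PiE (UNIV::'n set) (\<lambda>_. {\<sigma>. \<sigma> permutes {..<N}})"
      have finS: "finite S" unfolding S_def by (intro finite_PiE) (auto simp: finite_permutations)
      have neS: "S \<noteq> {}" unfolding S_def by (auto simp: PiE_eq_empty_iff intro: permutes_id)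
      have cardS: "real (card S) = fact N ^ CARD('n)"
        unfolding S_def by (simp add: card_PiE card_permutations finite_permutations)
      define F :: real where "F = fact N ^ CARD('n)"
      have F: "F > 0" unfolding F_def by simp
      define a where "a \<sigma> = kappa N (\<lambda>j. h (\<chi> i. perm_act (\<sigma> i) (\<Xi> N i) j))" for \<sigma>
      have ab: "\<bar>a \<sigma>\<bar> \<le> B" if s: "\<sigma> \<in> S" for \<sigma>
      proof -
        have perm: "\<And>i. inv (\<sigma> i) permutes {..<N}" using s unfolding S_def
          by (auto intro: permutes_inv)
        have inr: "\<And>i j. j < N \<Longrightarrow> inv (\<sigma> i) j < N"
          using perm permutes_in_image by fastforce
        have "\<bar>a \<sigma> - kappa N (\<lambda>j. 0)\<bar> \<le> B" unfolding a_def
        proof (rule kappa_diff_le)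
          fix j assume j: "j < N"
          have "(\<chi> i. perm_act (\<sigma> i) (\<Xi> N i) j) \<in> cube R"
            using rng inr[OF j] unfolding cube_def perm_act_def by auto
          then show "\<bar>h (\<chi> i. perm_act (\<sigma> i) (\<Xi> N i) j) - 0\<bar> \<le> B" using B(2) by auto
        qed (use B in auto)
        then show ?thesis by (simp add: kappa_def)
      qed
      have e0: "ln ((1/F) * (\<Sum>s\<in>S. exp (real N * 0))) / real N = 0"
        using cardS F by (simp add: F_def)
      have up: "ln ((1/F) * (\<Sum>s\<in>S. exp (real N * a s))) / real N \<le> ln ((1/F) * (\<Sum>s\<in>S. exp (real N * 0))) / real N + B"
        by (rule ln_sum_exp_compare[OF finS neS F N]) (use ab in force)
      have lo: "ln ((1/F) * (\<Sum>s\<in>S. exp (real N * 0))) / real N \<le> ln ((1/F) * (\<Sum>s\<in>S. exp (real N * a s))) / real N + B"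
        by (rule ln_sum_exp_compare[OF finS neS F N]) (use ab in force)
      have eq: "pressure_term h \<Xi> N = ln ((1/F) * (\<Sum>s\<in>S. exp (real N * a s))) / real N"
        unfolding pressure_term_def S_def F_def a_def by simp
      show ?thesis using up lo e0 unfolding eq by linarith
    qed
  qed
qed

lemma P_finite:
  fixes \<mu> :: "(real^'n) measure"
  assumes mu: "\<mu> \<in> ProbCube R" and R: "R > 0" and h: "continuous_on (cube R) h"
  shows "\<bar>P_sym R h (\<lambda>i. marginal i \<mu>)\<bar> \<noteq> \<infinity>"
proof -
  let ?X = "SOME \<Xi>. approx_seq R (\<lambda>i. marginal i \<mu>) \<Xi>"
  have ap: "approx_seq R (\<lambda>i. marginal i \<mu>) ?X" by (rule some_approx[OF mu R])
  obtain B where B: "\<And>N. \<bar>pressure_term h ?X N\<bar> \<le> B"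
    using pt_bound[OF h, of ?X] ap unfolding approx_seq_def by blast
  have ev1: "eventually (\<lambda>N. ereal (pressure_term h ?X N) \<le> ereal B) sequentially"
    using B by (intro always_eventually) (auto simp: abs_le_iff)
  have ev2: "eventually (\<lambda>N. ereal (-B) \<le> ereal (pressure_term h ?X N)) sequentially"
  proof (intro always_eventually allI)
    fix N show "ereal (-B) \<le> ereal (pressure_term h ?X N)" using B[of N] by simp
  qed
  have "P_sym R h (\<lambda>i. marginal i \<mu>) \<le> ereal B" unfolding P_sym_def
    by (rule Limsup_bounded[OF ev1])
  moreover have "ereal (-B) \<le> P_sym R h (\<lambda>i. marginal i \<mu>)" unfolding P_sym_def
    by (rule le_Limsup[OF _ ev2]) simp
  ultimately show ?thesis by auto
qed

lemma ramp_cont: "continuous_on {-R..R} (ramp R M l)"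
proof -
  have "ramp R M l = (\<lambda>x. min 1 (max 0 ((gridpt R M (Suc l) - x) * inverse (2*R/real M))))"
    unfolding ramp_def by (simp only: divide_inverse)
  then show ?thesis by (simp only:) (intro continuous_intros)
qed

lemma keyK:
  fixes \<mu> :: "(real^'n) measure" and \<mu>s :: "nat \<Rightarrow> (real^'n) measure"
  assumes R: "R > 0" and mu: "\<mu> \<in> ProbCube R" and mus: "\<And>k. \<mu>s k \<in> ProbCube R"
    and weak: "weak_star_conv R \<mu>s \<mu>" and h: "continuous_on (cube R) h" and e: "e > 0"
  shows "eventually (\<lambda>k. P_sym R h (\<lambda>i. marginal i (\<mu>s k)) \<le> P_sym R h (\<lambda>i. marginal i \<mu>) + ereal e) sequentially"
proof -
  obtain d where d: "d > 0" and dH0: "\<forall>\<Xi> H N. N > 0 \<longrightarrow>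
     (\<forall>i j. j < N \<longrightarrow> -R \<le> \<Xi> N i j \<and> \<Xi> N i j \<le> R \<and> -R \<le> H N i j \<and> H N i j \<le> R) \<longrightarrow>
     (\<forall>i. (\<Sum>j<N. \<bar>\<Xi> N i j - H N i j\<bar>) / real N \<le> d) \<longrightarrow>
     pressure_term h \<Xi> N \<le> pressure_term h H N + e"
    using pressure_compare[OF h e] by (elim exE conjE) (rule that)
  define M where "M = nat \<lceil>12*R/d\<rceil> + 1"
  have M0: "M > 0" unfolding M_def by simp
  have "12*R/d \<le> real M" unfolding M_def using real_nat_ceiling_ge[of "12*R/d"] by simp
  then have M1: "3 * (2*R/M) \<le> d/2" using d R M0 by (simp add: field_simps)
  define e0 where "e0 = d/(4*R)"
  have e0: "e0 > 0" unfolding e0_def using d R by simp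
  define \<psi> where "\<psi> l x = ramp R M l x" for l x
  have wc: "(\<lambda>k. \<integral>x. \<psi> l (x$i) \<partial>(\<mu>s k)) \<longlonglongrightarrow> (\<integral>x. \<psi> l (x$i) \<partial>\<mu>)" for l i
    using weak cont_coord[OF ramp_cont] unfolding weak_star_conv_def \<psi>_def by blast
  have ev1: "eventually (\<lambda>k. \<forall>i. \<forall>l\<in>{..<M}. dist (\<integral>x. \<psi> l (x$i) \<partial>(\<mu>s k)) (\<integral>x. \<psi> l (x$i) \<partial>\<mu>) < e0/3) sequentially"
    using e0 by (intro eventually_all_finite eventually_ball_finite ballI tendstoD[OF wc]) auto
  show ?thesis
  proof (rule eventually_mono[OF ev1])
    fix k assume k: "\<forall>i. \<forall>l\<in>{..<M}. dist (\<integral>x. \<psi> l (x$i) \<partial>(\<mu>s k)) (\<integral>x. \<psi> l (x$i) \<partial>\<mu>) < e0/3"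
    define X where "X = (SOME \<Xi>. approx_seq R (\<lambda>i. marginal i \<mu>) \<Xi>)"
    define H where "H = (SOME \<Xi>. approx_seq R (\<lambda>i. marginal i (\<mu>s k)) \<Xi>)"
    have apX: "approx_seq R (\<lambda>i. marginal i \<mu>) X" unfolding X_def by (rule some_approx[OF mu R])
    have apH: "approx_seq R (\<lambda>i. marginal i (\<mu>s k)) H" unfolding H_def by (rule some_approx[OF mus R])
    have cX: "(\<lambda>N. kappa N (\<lambda>j. \<psi> l (X N i j))) \<longlonglongrightarrow> (\<integral>x. \<psi> l (x$i) \<partial>\<mu>)" for l i
      unfolding \<psi>_def by (rule approx_conv[OF mu apX ramp_cont])
    have cH: "(\<lambda>N. kappa N (\<lambda>j. \<psi> l (H N i j))) \<longlonglongrightarrow> (\<integral>x. \<psi> l (x$i) \<partial>(\<mu>s k))" for l i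
      unfolding \<psi>_def by (rule approx_conv[OF mus apH ramp_cont])
    have ev2: "eventually (\<lambda>N. (\<forall>i. \<forall>l\<in>{..<M}. dist (kappa N (\<lambda>j. \<psi> l (X N i j))) (\<integral>x. \<psi> l (x$i) \<partial>\<mu>) < e0/3
        \<and> dist (kappa N (\<lambda>j. \<psi> l (H N i j))) (\<integral>x. \<psi> l (x$i) \<partial>(\<mu>s k)) < e0/3) \<and> N > 0) sequentially"
    proof (rule eventually_conj)
      show "eventually (\<lambda>N. N > 0) sequentially" by (rule eventually_gt_at_top)
      show "eventually (\<lambda>N. \<forall>i. \<forall>l\<in>{..<M}. dist (kappa N (\<lambda>j. \<psi> l (X N i j))) (\<integral>x. \<psi> l (x$i) \<partial>\<mu>) < e0/3
        \<and> dist (kappa N (\<lambda>j. \<psi> l (H N i j))) (\<integral>x. \<psi> l (x$i) \<partial>(\<mu>s k)) < e0/3) sequentially"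
      proof (rule eventually_all_finite, rule eventually_ball_finite, simp, rule ballI, rule eventually_conj)
        fix i l
        show "eventually (\<lambda>N. dist (kappa N (\<lambda>j. \<psi> l (X N i j))) (\<integral>x. \<psi> l (x$i) \<partial>\<mu>) < e0/3) sequentially"
          using e0 by (intro tendstoD[OF cX]) simp
        show "eventually (\<lambda>N. dist (kappa N (\<lambda>j. \<psi> l (H N i j))) (\<integral>x. \<psi> l (x$i) \<partial>(\<mu>s k)) < e0/3) sequentially"
          using e0 by (intro tendstoD[OF cH]) simp
      qed
    qed
    have ev3: "eventually (\<lambda>N. ereal (pressure_term h H N) \<le> ereal (pressure_term h X N) + ereal e) sequentially"
    proof (rule eventually_mono[OF ev2])
      fix N assume NN: "(\<forall>i. \<forall>l\<in>{..<M}. dist (kappa N (\<lambda>j. \<psi> l (X N i j))) (\<integral>x. \<psi> l (x$i) \<partial>\<mu>) < e0/3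
        \<and> dist (kappa N (\<lambda>j. \<psi> l (H N i j))) (\<integral>x. \<psi> l (x$i) \<partial>(\<mu>s k)) < e0/3) \<and> N > 0"
      then have N: "N > 0" by simp
      have rX: "\<And>N i j. j < N \<Longrightarrow> -R \<le> X N i j \<and> X N i j \<le> R" using apX unfolding approx_seq_def by blast
      have rH: "\<And>N i j. j < N \<Longrightarrow> -R \<le> H N i j \<and> H N i j \<le> R" using apH unfolding approx_seq_def by blast
      have sX: "\<And>N i j k. j \<le> k \<Longrightarrow> k < N \<Longrightarrow> X N i j \<le> X N i k" using apX unfolding approx_seq_def by blast
      have sH: "\<And>N i j k. j \<le> k \<Longrightarrow> k < N \<Longrightarrow> H N i j \<le> H N i k" using apH unfolding approx_seq_def by blast
      have D: "(\<Sum>j<N. \<bar>H N i j - X N i j\<bar>) / real N \<le> d" for i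
      proof -
        have "(\<Sum>j<N. \<bar>H N i j - X N i j\<bar>) / real N \<le> 3 * (2*R/M) + 2*R/M *
           (\<Sum>l<M. \<bar>kappa N (\<lambda>j. ramp R M l (H N i j)) - kappa N (\<lambda>j. ramp R M l (X N i j))\<bar>)"
          by (rule l1_bound[OF R M0 N]) (use rX rH sX sH in auto)
        moreover have "(\<Sum>l<M. \<bar>kappa N (\<lambda>j. ramp R M l (H N i j)) - kappa N (\<lambda>j. ramp R M l (X N i j))\<bar>) \<le> (\<Sum>l<M. e0)"
        proof (rule sum_mono)
          fix l assume l: "l \<in> {..<M}"
          have a: "dist (kappa N (\<lambda>j. \<psi> l (X N i j))) (\<integral>x. \<psi> l (x$i) \<partial>\<mu>) < e0/3"
            "dist (kappa N (\<lambda>j. \<psi> l (H N i j))) (\<integral>x. \<psi> l (x$i) \<partial>(\<mu>s k)) < e0/3"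
            using NN l by auto
          have b: "dist (\<integral>x. \<psi> l (x$i) \<partial>(\<mu>s k)) (\<integral>x. \<psi> l (x$i) \<partial>\<mu>) < e0/3" using k l by auto
          show "\<bar>kappa N (\<lambda>j. ramp R M l (H N i j)) - kappa N (\<lambda>j. ramp R M l (X N i j))\<bar> \<le> e0"
            using a b unfolding \<psi>_def dist_real_def by linarith
        qed
        ultimately have "(\<Sum>j<N. \<bar>H N i j - X N i j\<bar>) / real N \<le> 3 * (2*R/M) + 2*R/M * (\<Sum>l<M. e0)"
          using R M0 mult_left_mono[of "(\<Sum>l<M. \<bar>kappa N (\<lambda>j. ramp R M l (H N i j)) - kappa N (\<lambda>j. ramp R M l (X N i j))\<bar>)" "(\<Sum>l<M. e0)" "2*R/M"]
          by simp
        also have "(\<Sum>l<M. e0) = M * e0" by simp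
        also have "2*R/M * (M * e0) = d/2" using M0 R unfolding e0_def by simp
        finally show ?thesis using M1 by linarith
      qed
      have "pressure_term h H N \<le> pressure_term h X N + e"
      proof -
        have r': "\<forall>i j. j < N \<longrightarrow> -R \<le> H N i j \<and> H N i j \<le> R \<and> -R \<le> X N i j \<and> X N i j \<le> R"
          using rX rH by auto
        have D': "\<forall>i. (\<Sum>j<N. \<bar>H N i j - X N i j\<bar>) / real N \<le> d" using D by auto
        show ?thesis by (rule mp[OF mp[OF mp[OF spec[OF spec[OF spec[OF dH0, of H], of X], of N] N] r'] D'])
      qed
      then show "ereal (pressure_term h H N) \<le> ereal (pressure_term h X N) + ereal e" by simp
    qed
    have "P_sym R h (\<lambda>i. marginal i (\<mu>s k)) = limsup (\<lambda>N. ereal (pressure_term h H N))"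
      unfolding P_sym_def H_def by (rule refl)
    also have "\<dots> \<le> limsup (\<lambda>N. ereal (pressure_term h X N) + ereal e)"
      by (rule Limsup_mono[OF ev3])
    also have "\<dots> = limsup (\<lambda>N. ereal (pressure_term h X N)) + ereal e"
      by (rule Limsup_add_ereal_right) simp_all
    also have "limsup (\<lambda>N. ereal (pressure_term h X N)) = P_sym R h (\<lambda>i. marginal i \<mu>)"
      unfolding P_sym_def X_def by (rule refl)
    finally show "P_sym R h (\<lambda>i. marginal i (\<mu>s k)) \<le> P_sym R h (\<lambda>i. marginal i \<mu>) + ereal e" .
  qed
qed

theorem corollary2p7:
  fixes R :: real and \<mu> :: "(real^'n) measure" and \<mu>s :: "nat \<Rightarrow> (real^'n) measure"
  assumes "R > 0"
    and "\<mu> \<in> ProbCube R" and "\<And>k. \<mu>s k \<in> ProbCube R"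
    and "weak_star_conv R \<mu>s \<mu>"
  shows "I_sym R \<mu> \<le> liminf (\<lambda>k. I_sym R (\<mu>s k))"
proof -
  note R = assms(1) and mu = assms(2) and mus = assms(3) and weak = assms(4)
  show ?thesis
    unfolding I_sym_def[of R \<mu>]
  proof (rule SUP_least)
    fix h :: "real^'n \<Rightarrow> real" assume hs: "h \<in> {h. continuous_on (cube R) h}"
    then have hc: "continuous_on (cube R) h" by simp
    define a where "a = (\<integral>x. h x \<partial>\<mu>)"
    have fin: "\<bar>P_sym R h (\<lambda>i. marginal i \<mu>)\<bar> \<noteq> \<infinity>" by (rule P_finite[OF mu R hc])
    then obtain p where p: "P_sym R h (\<lambda>i. marginal i \<mu>) = ereal p" by (cases "P_sym R h (\<lambda>i. marginal i \<mu>)") auto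
    show "ereal (\<integral>x. h x \<partial>\<mu>) - P_sym R h (\<lambda>i. marginal i \<mu>) \<le> liminf (\<lambda>k. I_sym R (\<mu>s k))"
      unfolding le_Liminf_iff
    proof (intro allI impI)
      fix y assume y: "y < ereal (\<integral>x. h x \<partial>\<mu>) - P_sym R h (\<lambda>i. marginal i \<mu>)"
      then have y': "y < ereal (a - p)" unfolding p a_def by simp
      obtain z where z: "y \<le> ereal z" "z < a - p"
      proof (cases y)
        case (real r) then show ?thesis using that y' by auto
      next
        case PInf then show ?thesis using y' by simp
      next
        case MInf then show ?thesis using that[of "a - p - 1"] by simp
      qed
      define \<epsilon> where "\<epsilon> = (a - p - z) / 3"
      have \<epsilon>: "\<epsilon> > 0" unfolding \<epsilon>_def using z by simp
      have ev1: "eventually (\<lambda>k. P_sym R h (\<lambda>i. marginal i (\<mu>s k)) \<le> P_sym R h (\<lambda>i. marginal i \<mu>) + ereal \<epsilon>) sequentially"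
        by (rule keyK[OF R mu mus weak hc \<epsilon>])
      have conv: "(\<lambda>k. \<integral>x. h x \<partial>(\<mu>s k)) \<longlonglongrightarrow> a" using weak hc unfolding weak_star_conv_def a_def by blast
      have ev2: "eventually (\<lambda>k. dist (\<integral>x. h x \<partial>(\<mu>s k)) a < \<epsilon>) sequentially"
        by (rule tendstoD[OF conv \<epsilon>])
      show "eventually (\<lambda>k. y < I_sym R (\<mu>s k)) sequentially"
      proof (rule eventually_mono[OF eventually_conj[OF ev1 ev2]])
        fix k assume k: "P_sym R h (\<lambda>i. marginal i (\<mu>s k)) \<le> P_sym R h (\<lambda>i. marginal i \<mu>) + ereal \<epsilon>
            \<and> dist (\<integral>x. h x \<partial>(\<mu>s k)) a < \<epsilon>"
        define ak where "ak = (\<integral>x. h x \<partial>(\<mu>s k))"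
        have Pk: "P_sym R h (\<lambda>i. marginal i (\<mu>s k)) \<le> ereal (p + \<epsilon>)" using k p by simp
        have akb: "ak > a - \<epsilon>" using k unfolding ak_def dist_real_def by linarith
        have "ereal ak - ereal (p + \<epsilon>) \<le> ereal ak - P_sym R h (\<lambda>i. marginal i (\<mu>s k))"
          by (rule ereal_minus_mono[OF order_refl Pk])
        also have "ereal ak - P_sym R h (\<lambda>i. marginal i (\<mu>s k)) \<le> I_sym R (\<mu>s k)"
          unfolding I_sym_def ak_def using hs by (rule SUP_upper2) simp
        finally have "ereal (ak - (p + \<epsilon>)) \<le> I_sym R (\<mu>s k)" by simp
        moreover have "z < ak - (p + \<epsilon>)"
        proof -
          have "3 * \<epsilon> = a - p - z" unfolding \<epsilon>_def by simp
          then show ?thesis using akb \<epsilon> by linarith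
        qed
        ultimately have "ereal z < I_sym R (\<mu>s k)"
          using less_le_trans[of "ereal z" "ereal (ak - (p + \<epsilon>))"] by simp
        then show "y < I_sym R (\<mu>s k)" using z(1) by (rule le_less_trans[rotated])
      qed
    qed
  qed
qed

end
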